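(* Let $\mathcal{A}=\{A_1,\dots,A_m\}$ be a bimodal collection of pairwise disjoint nonempty subsets of a finite abelian group $G$, with internal difference groups $H_1,\dots,H_m$, labelled so that $|A_i|<|H_i|$ exactly for $i=1,\dots,r$, where $r\ge2$. Let $D=(a_1+H_1)\setminus A_1$, where $a_1+H_1$ is the coset of $H_1$ containing $A_1$, and suppose $\mathcal{A}$ is in canonical position, i.e. $D$ is a subgroup of $G$. Then $(H_1+H_2+\dots+H_r)\setminus D\subseteq A_1\cup A_2\cup\dots\cup A_m$.
   Context: $G$ is written additively. The internal difference group $H_i$ of $A_i$ is the subgroup generated by all $x-y$ with $x,y\in A_i$; $A_i$ lies in a single coset of $H_i$ and $|A_i|\le|H_i|$. A collection $\{A_1,\dots,A_m\}$ of pairwise disjoint subsets of $G$ is bimodal if for every $i$ and every $\delta\in G\setminus\{0\}$, the number $N_i(\delta)$ of pairs $(a,b)$ with $a\in A_i$, $b\in A_j$ for some $j\neq i$, and $a-b=\delta$, satisfies $N_i(\delta)\in\{0,|A_i|\}$. (For such collections with $r\ge2$ the set $D$ equals $(a_i+H_i)\setminus A_i$ for every $i\le r$ and is a coset of a subgroup; canonical position means the collection has been translated so that $D$ is a subgroup.) *)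

theory Defs
  imports Main
begin

definition is_subgroup :: "'a::ab_group_add set \<Rightarrow> bool" where
  "is_subgroup H \<longleftrightarrow> 0 \<in> H \<and> (\<forall>x\<in>H. \<forall>y\<in>H. x - y \<in> H)"

definition gen_subgroup :: "'a::ab_group_add set \<Rightarrow> 'a set" where
  "gen_subgroup S = \<Inter>{H. is_subgroup H \<and> S \<subseteq> H}"

definition diff_group :: "'a::ab_group_add set \<Rightarrow> 'a set" where
  "diff_group A = gen_subgroup {x - y | x y. x \<in> A \<and> y \<in> A}"

definition N_count :: "(nat \<Rightarrow> 'a::ab_group_add set) \<Rightarrow> nat \<Rightarrow> nat \<Rightarrow> 'a \<Rightarrow> nat" where
  "N_count A m i \<delta> = card {(a, b). a \<in> A i \<and> (\<exists>j\<in>{1..m}. j \<noteq> i \<and> b \<in> A j) \<and> a - b = \<delta>}"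

definition bimodal :: "(nat \<Rightarrow> 'a::ab_group_add set) \<Rightarrow> nat \<Rightarrow> bool" where
  "bimodal A m \<longleftrightarrow> (\<forall>i\<in>{1..m}. \<forall>\<delta>. \<delta> \<noteq> 0 \<longrightarrow>
      N_count A m i \<delta> = 0 \<or> N_count A m i \<delta> = card (A i))"

fun subgroup_sum :: "(nat \<Rightarrow> 'a::ab_group_add set) \<Rightarrow> nat \<Rightarrow> 'a set" where
  "subgroup_sum H 0 = {0}"
| "subgroup_sum H (Suc n) = {x + y | x y. x \<in> subgroup_sum H n \<and> y \<in> H (Suc n)}"

end

theory Submission
  imports Defs
begin

lemma sg_zero: "is_subgroup H \<Longrightarrow> 0 \<in> H"
  by (simp add: is_subgroup_def)

lemma sg_diff: "is_subgroup H \<Longrightarrow> x \<in> H \<Longrightarrow> y \<in> H \<Longrightarrow> x - y \<in> H"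
  by (simp add: is_subgroup_def)

lemma sg_neg: "is_subgroup H \<Longrightarrow> x \<in> H \<Longrightarrow> - x \<in> H"
  using sg_diff[of H 0 x] sg_zero[of H] by simp

lemma sg_add: "is_subgroup H \<Longrightarrow> x \<in> H \<Longrightarrow> y \<in> H \<Longrightarrow> x + y \<in> H"
  using sg_diff[of H x "- y"] sg_neg[of H y] by simp

lemma gen_sg: "is_subgroup (gen_subgroup S)"
  unfolding is_subgroup_def gen_subgroup_def by auto

lemma gen_sub: "S \<subseteq> gen_subgroup S"
  unfolding gen_subgroup_def by auto

lemma gen_least: "is_subgroup T \<Longrightarrow> S \<subseteq> T \<Longrightarrow> gen_subgroup S \<subseteq> T"
  unfolding gen_subgroup_def by auto

lemma dg_sg: "is_subgroup (diff_group A)"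
  unfolding diff_group_def by (rule gen_sg)

lemma dg_mem: "x \<in> A \<Longrightarrow> y \<in> A \<Longrightarrow> x - y \<in> diff_group A"
  unfolding diff_group_def by (rule subsetD[OF gen_sub]) blast

lemma transl_surj:
  fixes R :: "'a::ab_group_add set"
  assumes "finite R" "\<forall>y\<in>R. y + s \<in> R" "y \<in> R"
  shows "y - s \<in> R"
proof -
  have "(\<lambda>z. z + s) ` R = R"
    apply (rule endo_inj_surj[OF assms(1)])
    using assms(2) by (auto simp: inj_on_def)
  then obtain z where "z \<in> R" "y = z + s" using assms(3) by (metis imageE)
  then show ?thesis by simp
qed

lemma periodic:
  fixes R A :: "'a::ab_group_add set"
  assumes fin: "finite R"
    and hyp: "\<forall>a\<in>A. \<forall>a'\<in>A. \<forall>y\<in>R. y + (a' - a) \<in> R"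
  shows "\<forall>h\<in>diff_group A. \<forall>y\<in>R. y + h \<in> R"
proof -
  define T where "T = {t. \<forall>y\<in>R. y + t \<in> R}"
  have T0: "0 \<in> T" unfolding T_def by simp
  have Td: "t - s \<in> T" if t: "t \<in> T" and s: "s \<in> T" for t s
  proof -
    have "\<forall>y\<in>R. y + (t - s) \<in> R"
    proof
    fix y assume y: "y \<in> R"
    have "y - s \<in> R" using transl_surj[OF fin _ y, of s] s unfolding T_def by auto
    then have "(y - s) + t \<in> R" using t unfolding T_def by auto
    then show "y + (t - s) \<in> R" by (simp add: algebra_simps)
    qed
    then show ?thesis unfolding T_def by simp
  qed
  have "is_subgroup T" unfolding is_subgroup_def using T0 Td by blast
  moreover have "{x - y |x y. x \<in> A \<and> y \<in> A} \<subseteq> T"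
    using hyp unfolding T_def by auto
  ultimately have "diff_group A \<subseteq> T"
    unfolding diff_group_def by (rule gen_least)
  then show ?thesis unfolding T_def by auto
qed

theorem proposition3p7:
  fixes A :: "nat \<Rightarrow> 'a::{ab_group_add, finite} set"
    and m r :: nat and a1 :: 'a
  assumes disj: "\<forall>i\<in>{1..m}. \<forall>j\<in>{1..m}. i \<noteq> j \<longrightarrow> A i \<inter> A j = {}"
    and nonempty: "\<forall>i\<in>{1..m}. A i \<noteq> {}"
    and bim: "bimodal A m"
    and r2: "2 \<le> r" and rm: "r \<le> m"
    and label: "\<forall>i\<in>{1..m}. card (A i) < card (diff_group (A i)) \<longleftrightarrow> i \<le> r"
    and a1: "a1 \<in> A 1"
    and canon: "is_subgroup (((+) a1 ` diff_group (A 1)) - A 1)"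
  shows "subgroup_sum (\<lambda>i. diff_group (A i)) r - (((+) a1 ` diff_group (A 1)) - A 1)
           \<subseteq> (\<Union>i\<in>{1..m}. A i)"
proof -
  define U where "U = (\<Union>i\<in>{1..m}. A i)"
  define Hf where "Hf = (\<lambda>i. diff_group (A i))"
  define D where "D = ((+) a1 ` diff_group (A 1)) - A 1"
  define H where "H = diff_group (A 1)"
  have sgH: "\<And>i. is_subgroup (Hf i)" unfolding Hf_def by (rule dg_sg)
  have Rchar: "\<And>i y. i \<in> {1..m} \<Longrightarrow> y \<in> U - A i \<longleftrightarrow> (\<exists>j\<in>{1..m}. j \<noteq> i \<and> y \<in> A j)"
  proof -
    fix i y assume i: "i \<in> {1..m}"
    show "y \<in> U - A i \<longleftrightarrow> (\<exists>j\<in>{1..m}. j \<noteq> i \<and> y \<in> A j)"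
    proof
      assume "y \<in> U - A i"
      then obtain j where j: "j \<in> {1..m}" "y \<in> A j" "y \<notin> A i" unfolding U_def by auto
      then have "j \<noteq> i" by auto
      then show "\<exists>j\<in>{1..m}. j \<noteq> i \<and> y \<in> A j" using j by blast
    next
      assume "\<exists>j\<in>{1..m}. j \<noteq> i \<and> y \<in> A j"
      then obtain j where j: "j \<in> {1..m}" "j \<noteq> i" "y \<in> A j" by blast
      have "A i \<inter> A j = {}" using disj i j by auto
      then show "y \<in> U - A i" using j unfolding U_def by auto
    qed
  qed
  have F2: "\<And>i h y. i \<in> {1..m} \<Longrightarrow> h \<in> Hf i \<Longrightarrow> y \<in> U - A i \<Longrightarrow> y + h \<in> U - A i"
  proof -
    fix i h y assume i: "i \<in> {1..m}" and h: "h \<in> Hf i" and y: "y \<in> U - A i"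
    have "\<forall>a\<in>A i. \<forall>a'\<in>A i. \<forall>y\<in>U - A i. y + (a' - a) \<in> U - A i"
    proof (intro ballI)
      fix a a' y assume a: "a \<in> A i" and a': "a' \<in> A i" and y: "y \<in> U - A i"
      define \<delta> where "\<delta> = a - y"
      have dnz: "\<delta> \<noteq> 0" using a y unfolding \<delta>_def by auto
      define P where "P = {(a, b). a \<in> A i \<and> (\<exists>j\<in>{1..m}. j \<noteq> i \<and> b \<in> A j) \<and> a - b = \<delta>}"
      have NP: "N_count A m i \<delta> = card P" unfolding N_count_def P_def by simp
      have yP: "(a, y) \<in> P" unfolding P_def \<delta>_def using a y Rchar[OF i] by auto
      have finP: "finite P" by simp
      have "card P \<noteq> 0" using yP finP by auto
      then have cP: "card P = card (A i)" using bim i dnz NP unfolding bimodal_def by metis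
      have inj: "inj_on fst P" unfolding inj_on_def P_def by auto
      have sub: "fst ` P \<subseteq> A i" unfolding P_def by auto
      have "card (fst ` P) = card (A i)" using card_image[OF inj] cP by simp
      then have "fst ` P = A i" using card_subset_eq[OF _ sub] by simp
      then obtain p where p: "p \<in> P" "fst p = a'" using a' by force
      obtain b' where pb: "p = (a', b')" using p by (cases p) auto
      have "b' = y + (a' - a)" using p pb unfolding P_def \<delta>_def by (auto simp: algebra_simps)
      moreover have "b' \<in> U - A i" using p pb Rchar[OF i] unfolding P_def by auto
      ultimately show "y + (a' - a) \<in> U - A i" by simp
    qed
    then have "\<forall>h\<in>diff_group (A i). \<forall>y\<in>U - A i. y + h \<in> U - A i"
      by (intro periodic) auto
    then show "y + h \<in> U - A i" using h y unfolding Hf_def by auto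
  qed
  have F2': "\<And>i h y. i \<in> {1..m} \<Longrightarrow> h \<in> Hf i \<Longrightarrow> y \<notin> U - A i \<Longrightarrow> y + h \<notin> U - A i"
  proof
    fix i h y assume i: "i \<in> {1..m}" and h: "h \<in> Hf i" and y: "y \<notin> U - A i"
      and c: "y + h \<in> U - A i"
    have "y + h + (- h) \<in> U - A i" using F2[OF i sg_neg[OF sgH h] c] .
    then show False using y by simp
  qed
  have F1: "\<And>i a x. a \<in> A i \<Longrightarrow> x \<in> A i \<Longrightarrow> x - a \<in> Hf i"
    unfolding Hf_def by (rule dg_mem)
  have F3: "\<And>i a y. i \<in> {1..m} \<Longrightarrow> a \<in> A i \<Longrightarrow> y \<in> U \<Longrightarrow> y - a \<in> Hf i \<Longrightarrow> y \<in> A i"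
  proof -
    fix i a y assume i: "i \<in> {1..m}" and a: "a \<in> A i" and y: "y \<in> U" and ya: "y - a \<in> Hf i"
    show "y \<in> A i"
    proof (rule ccontr)
      assume n: "y \<notin> A i"
      have "y \<in> U - A i" using y n by blast
      then have "y + (- (y - a)) \<in> U - A i" by (rule F2[OF i sg_neg[OF sgH ya]])
      then show False using a by simp
    qed
  qed
  have P: "\<And>i a y h. i \<in> {1..m} \<Longrightarrow> a \<in> A i \<Longrightarrow> y \<notin> U \<Longrightarrow> y - a \<notin> Hf i \<Longrightarrow> h \<in> Hf i
            \<Longrightarrow> y + h \<notin> U"
  proof
    fix i a y h assume i: "i \<in> {1..m}" and a: "a \<in> A i" and y: "y \<notin> U" and ya: "y - a \<notin> Hf i"
      and h: "h \<in> Hf i" and c: "y + h \<in> U"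
    have "y + h \<notin> U - A i" using F2'[OF i h] y by auto
    then have "y + h \<in> A i" using c by auto
    then have "(y + h) - a \<in> Hf i" using F1 a by blast
    then have "(y + h - a) - h \<in> Hf i" using sg_diff[OF sgH _ h] by blast
    then show False using ya by (simp add: algebra_simps)
  qed
  have one: "1 \<in> {1..m}" using r2 rm by auto
  have sgD: "is_subgroup D" using canon unfolding D_def .
  have HH: "H = Hf 1" unfolding H_def Hf_def by simp
  have sgH1: "is_subgroup H" unfolding H_def by (rule dg_sg)
  have A1sub: "A 1 \<subseteq> (+) a1 ` H"
  proof
    fix x assume "x \<in> A 1"
    then have "x - a1 \<in> H" using F1[OF a1] HH by auto
    then show "x \<in> (+) a1 ` H" by (metis add_diff_cancel_left' add_diff_eq diff_add_cancel image_eqI)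
  qed
  have cardlt: "card (A 1) < card H" using label one r2 unfolding H_def by auto
  have "D \<noteq> {}"
  proof
    assume "D = {}"
    then have "(+) a1 ` H \<subseteq> A 1" unfolding D_def H_def by auto
    then have "card ((+) a1 ` H) \<le> card (A 1)" by (intro card_mono) auto
    moreover have "card ((+) a1 ` H) = card H" by (rule card_image) (auto simp: inj_on_def)
    ultimately show False using cardlt by simp
  qed
  have "0 \<in> D" using sgD by (rule sg_zero)
  then obtain h0 where h0: "h0 \<in> H" "0 = a1 + h0" unfolding D_def H_def by auto
  have a1H: "a1 \<in> H" using sg_neg[OF sgH1 h0(1)] h0(2) by (metis add.inverse_inverse add_eq_0_iff)
  have Dchar: "\<And>x. x \<in> D \<longleftrightarrow> x \<in> H \<and> x \<notin> A 1"
  proof -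
    fix x
    have "x \<in> (+) a1 ` H \<longleftrightarrow> x \<in> H"
    proof
      assume "x \<in> (+) a1 ` H" then show "x \<in> H" using sg_add[OF sgH1 a1H] by auto
    next
      assume "x \<in> H" then have "x - a1 \<in> H" using sg_diff[OF sgH1 _ a1H] by auto
      then show "x \<in> (+) a1 ` H" by (metis add_diff_cancel_left' add_diff_eq diff_add_cancel image_eqI)
    qed
    then show "x \<in> D \<longleftrightarrow> x \<in> H \<and> x \<notin> A 1" unfolding D_def H_def by auto
  qed
  have A1U: "A 1 \<subseteq> U" unfolding U_def using one by auto
  have A1H: "A 1 \<subseteq> H" using A1sub sg_add[OF sgH1 a1H] by auto
  have CH: "\<And>x. x \<in> H \<Longrightarrow> x \<notin> U \<longleftrightarrow> x \<in> D"
  proof -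
    fix x assume x: "x \<in> H"
    have "x \<in> U \<Longrightarrow> x \<in> A 1" using F3[OF one a1, of x] x sg_diff[OF sgH1 x a1H] HH by auto
    then show "x \<notin> U \<longleftrightarrow> x \<in> D" using Dchar x A1U by auto
  qed
  have DH: "D \<subseteq> H" using Dchar by auto
  have DC: "\<And>x. x \<in> D \<Longrightarrow> x \<notin> U" using CH DH by auto
  have P1: "\<And>y h. y \<notin> U \<Longrightarrow> y \<notin> H \<Longrightarrow> h \<in> H \<Longrightarrow> y + h \<notin> U"
  proof -
    fix y h assume "y \<notin> U" "y \<notin> H" "h \<in> H"
    moreover have "y - a1 \<notin> H" using \<open>y \<notin> H\<close> sg_add[OF sgH1 _ a1H, of "y - a1"] by auto
    ultimately show "y + h \<notin> U" using P[OF one a1] HH by auto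
  qed
  have Dper: "\<And>y d. y \<notin> U \<Longrightarrow> d \<in> D \<Longrightarrow> y + d \<notin> U"
  proof -
    fix y d assume y: "y \<notin> U" and d: "d \<in> D"
    show "y + d \<notin> U"
    proof (cases "y \<in> H")
      case True
      then have "y \<in> D" using CH y by auto
      then show ?thesis using sg_add[OF sgD _ d] DC by auto
    next
      case False
      then show ?thesis using P1 y d DH by auto
    qed
  qed
  have key: "\<And>k. k \<in> {1..r} \<Longrightarrow> (\<exists>b\<in>A k. b \<in> Hf k) \<and> D \<subseteq> Hf k \<and> (\<forall>y\<in>Hf k. y \<notin> U \<longrightarrow> y \<in> D)"
  proof -
    fix k assume kr: "k \<in> {1..r}"
    show "(\<exists>b\<in>A k. b \<in> Hf k) \<and> D \<subseteq> Hf k \<and> (\<forall>y\<in>Hf k. y \<notin> U \<longrightarrow> y \<in> D)"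
    proof (cases "k = 1")
      case True
      then show ?thesis using a1 a1H DH CH HH by auto
    next
      case False
      define K where "K = Hf k"
      have sgK: "is_subgroup K" unfolding K_def by (rule sgH)
      have k: "k \<in> {1..m}" using kr rm by auto
      have "A k \<noteq> {}" using nonempty k by blast
      then obtain b where b: "b \<in> A k" by blast
      have bU: "b \<in> U" using b k unfolding U_def by auto
      have inK: "\<And>x. x - b \<in> K \<Longrightarrow> x \<in> U \<Longrightarrow> x \<in> A k"
        using F3[OF k b] unfolding K_def by auto
      have Pk: "\<And>y h. y \<notin> U \<Longrightarrow> y - b \<notin> K \<Longrightarrow> h \<in> K \<Longrightarrow> y + h \<notin> U"
        using P[OF k b] unfolding K_def by auto
      have Aksub: "A k \<subseteq> (+) b ` K"
      proof
        fix x assume "x \<in> A k"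
        then have "x - b \<in> K" using F1[OF b] K_def by auto
        then show "x \<in> (+) b ` K" by (metis add_diff_cancel_left' add_diff_eq diff_add_cancel image_eqI)
      qed
      have cardk: "card (A k) < card K" using label k kr unfolding K_def Hf_def by auto
      obtain e where e: "e - b \<in> K" "e \<notin> U"
      proof -
        have "\<not> (+) b ` K \<subseteq> A k"
        proof
          assume "(+) b ` K \<subseteq> A k"
          then have "card ((+) b ` K) \<le> card (A k)" by (intro card_mono) auto
          moreover have "card ((+) b ` K) = card K" by (rule card_image) (auto simp: inj_on_def)
          ultimately show False using cardk by simp
        qed
        then obtain t where t: "t \<in> K" "b + t \<notin> A k" by auto
        have "b + t - b \<in> K" using t by simp
        then have "b + t \<notin> U" using inK t by blast
        then show ?thesis using that \<open>b + t - b \<in> K\<close> by blast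
      qed
      have A1K: "\<And>x. x \<in> A 1 \<Longrightarrow> x - b \<notin> K"
        using inK A1U disj one k False by blast
      have AkH: "\<And>x. x \<in> A k \<Longrightarrow> x \<notin> H"
      proof
        fix x assume x: "x \<in> A k" "x \<in> H"
        have "x \<in> U" using x k unfolding U_def by auto
        then have "x \<in> A 1" using F3[OF one a1, of x] sg_diff[OF sgH1 x(2) a1H] HH by auto
        then show False using x disj one k False by blast
      qed
      have zU: "0 \<notin> U" using DC \<open>0 \<in> D\<close> by auto
      have "\<exists>e0. e0 - b \<in> K \<and> e0 \<notin> U \<and> e0 \<in> H"
      proof (rule ccontr)
        assume na: "\<not> (\<exists>e0. e0 - b \<in> K \<and> e0 \<notin> U \<and> e0 \<in> H)"
        have cH: "\<And>x. x - b \<in> K \<Longrightarrow> x \<notin> H"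
          using na inK AkH by blast
        have "0 - b \<notin> K" using cH sg_zero[OF sgH1] by blast
        then have KC: "\<And>t. t \<in> K \<Longrightarrow> t \<notin> U" using Pk[OF zU] by fastforce
        show False
        proof (cases "H \<subseteq> K")
          case True
          then show False using KC a1 A1H A1U by blast
        next
          case False
          then obtain h where h: "h \<in> H" "h \<notin> K" by auto
          have eH: "e \<notin> H" using cH e by auto
          have ehU: "e + h \<notin> U" using P1[OF e(2) eH h(1)] .
          have ehK: "e + h - b \<notin> K"
          proof
            assume "e + h - b \<in> K"
            then have "(e + h - b) - (e - b) \<in> K" using sg_diff[OF sgK _ e(1)] by blast
            then show False using h by simp
          qed
          have bek: "b - e \<in> K" using sg_neg[OF sgK e(1)] by simp
          have "e + h + (b - e) \<notin> U" using Pk[OF ehU ehK bek] .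
          then have bh: "b + h \<notin> U" by (simp add: algebra_simps)
          have "b + h \<notin> H"
          proof
            assume "b + h \<in> H"
            then have "(b + h) - h \<in> H" using sg_diff[OF sgH1 _ h(1)] by blast
            then show False using AkH b by simp
          qed
          then have "b + h + (- h) \<notin> U" using P1[OF bh _ sg_neg[OF sgH1 h(1)]] by blast
          then show False using bU by simp
        qed
      qed
      then obtain e0 where e0: "e0 - b \<in> K" "e0 \<notin> U" "e0 \<in> H" by blast
      have e0D: "e0 \<in> D" using CH e0 by auto
      have DcK: "\<And>z. z \<in> D \<Longrightarrow> z - b \<in> K"
      proof (rule ccontr)
        fix z assume z: "z \<in> D" "z - b \<notin> K"
        have bek: "b - e0 \<in> K" using sg_neg[OF sgK e0(1)] by simp
        have "z + (b - e0) \<notin> U" using Pk[OF DC[OF z(1)] z(2) bek] .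
        moreover have "e0 - z \<in> D" using sg_diff[OF sgD e0D z(1)] .
        ultimately have "z + (b - e0) + (e0 - z) \<notin> U" by (rule Dper)
        then show False using bU by (simp add: algebra_simps)
      qed
      have bK: "b \<in> K" using DcK[OF \<open>0 \<in> D\<close>] sg_neg[OF sgK] by fastforce
      have DK: "D \<subseteq> K"
      proof
        fix z assume "z \<in> D"
        then have "z - b + b \<in> K" using DcK sg_add[OF sgK _ bK] by blast
        then show "z \<in> K" by simp
      qed
      have CK: "\<forall>y\<in>K. y \<notin> U \<longrightarrow> y \<in> D"
      proof (intro ballI impI)
        fix y assume y: "y \<in> K" "y \<notin> U"
        show "y \<in> D"
        proof (cases "y \<in> H")
          case True then show ?thesis using CH y by auto
        next
          case False
          have yaU: "y + a1 \<notin> U" using P1[OF y(2) False a1H] .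
          show ?thesis
          proof (cases "y + a1 - b \<in> K")
            case True
            then have "(y + a1 - b) - y \<in> K" using sg_diff[OF sgK _ y(1)] by blast
            then show ?thesis using A1K[OF a1] by (simp add: algebra_simps)
          next
            case False
            have "y + a1 + (- y) \<notin> U" using Pk[OF yaU False sg_neg[OF sgK y(1)]] .
            then show ?thesis using a1 A1U by auto
          qed
        qed
      qed
      show ?thesis using b bK DK CK unfolding K_def by blast
    qed
  qed
  have ind: "n \<le> r \<Longrightarrow> \<forall>x\<in>subgroup_sum Hf n. x \<notin> U \<longrightarrow> x \<in> D" for n
  proof (induction n)
    case 0
    then show ?case using \<open>0 \<in> D\<close> by simp
  next
    case (Suc n)
    have kr: "Suc n \<in> {1..r}" using Suc.prems by auto
    have km: "Suc n \<in> {1..m}" using kr rm by auto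
    from key[OF kr] obtain b where b: "b \<in> A (Suc n)" "b \<in> Hf (Suc n)"
      and DK: "D \<subseteq> Hf (Suc n)" and CK: "\<forall>y\<in>Hf (Suc n). y \<notin> U \<longrightarrow> y \<in> D" by blast
    have IH: "\<forall>x\<in>subgroup_sum Hf n. x \<notin> U \<longrightarrow> x \<in> D" using Suc by auto
    show ?case
    proof (intro ballI impI)
      fix x assume x: "x \<in> subgroup_sum Hf (Suc n)" "x \<notin> U"
      then obtain s h where sh: "x = s + h" "s \<in> subgroup_sum Hf n" "h \<in> Hf (Suc n)" by auto
      show "x \<in> D"
      proof (cases "x \<in> Hf (Suc n)")
        case True then show ?thesis using CK x by auto
      next
        case False
        have "x - b \<notin> Hf (Suc n)"
          using False sg_add[OF sgH _ b(2), of "x - b"] by auto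
        then have "x + (- h) \<notin> U" using P[OF km b(1) x(2) _ sg_neg[OF sgH sh(3)]] by blast
        then have "s \<in> D" using IH sh by auto
        then have "s + h \<in> Hf (Suc n)" using DK sg_add[OF sgH _ sh(3)] by blast
        then show ?thesis using False sh by simp
      qed
    qed
  qed
  show ?thesis
  proof
    fix x assume x: "x \<in> subgroup_sum (\<lambda>i. diff_group (A i)) r - (((+) a1 ` diff_group (A 1)) - A 1)"
    then have "x \<in> subgroup_sum Hf r" "x \<notin> D" unfolding Hf_def D_def by auto
    then have "x \<in> U" using ind[of r] by blast
    then show "x \<in> (\<Union>i\<in>{1..m}. A i)" unfolding U_def .
  qed
qed

end
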